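(* Let $N\ge2$ and let $f\in C(\mathbb{T}^N)$ be constant on diagonal orbits, i.e. $f(ux_1,\ldots,ux_N)=f(x)$ for all $x\in\mathbb{T}^N$ and $|u|=1$. Then $\|f-f*\sigma_n^{N-1}\|_\infty\to0$ as $n\to\infty$, where $(f*\sigma)(x)=\int_{\mathbb{T}^N}f(y)\sigma(xy^{-1})\,\mathrm{d}m(y)$.
   Context: $\mathbb{T}^N=\{x\in\mathbb{C}^N:|x_j|=1\}$ with normalized Haar measure $\mathrm{d}m=(2\pi)^{-N}\mathrm{d}\theta_1\cdots\mathrm{d}\theta_N$, $x_j=e^{\mathrm{i}\theta_j}$; $xy^{-1}$ is coordinatewise. $(t)_m=\prod_{i=1}^m(t+i-1)$. $\boldsymbol{Z}_{N,k}=\{\alpha\in\mathbb{Z}^N:\sum_i\alpha_i=0,\ \sum_i|\alpha_i|=2k\}$, $S_k(x)=\sum_{\alpha\in\boldsymbol{Z}_{N,k}}x^\alpha$, $\sigma_n^\delta(x)=\sum_{k=0}^n\frac{(-n)_k}{(-n-\delta)_k}S_k(x)$. *)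

theory Defs
  imports "HOL-Analysis.Analysis"
begin

text \<open>The N-torus, with N = CARD('n) given by a finite index type.\<close>
definition torus :: "(complex ^ 'n::finite) set" where
  "torus = {x. \<forall>i. norm (x $ i) = 1}"

definition Zset :: "nat \<Rightarrow> (int ^ 'n::finite) set" where
  "Zset k = {\<alpha>. (\<Sum>i\<in>UNIV. \<alpha> $ i) = 0 \<and> (\<Sum>i\<in>UNIV. \<bar>\<alpha> $ i\<bar>) = 2 * int k}"

definition monom_pow :: "complex ^ 'n::finite \<Rightarrow> int ^ 'n \<Rightarrow> complex" where
  "monom_pow x \<alpha> = (\<Prod>i\<in>UNIV. (x $ i) powi (\<alpha> $ i))"

definition S_poly :: "nat \<Rightarrow> complex ^ 'n::finite \<Rightarrow> complex" where
  "S_poly k x = (\<Sum>\<alpha>\<in>Zset k. monom_pow x \<alpha>)"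

definition sigma_ker :: "nat \<Rightarrow> real \<Rightarrow> complex ^ 'n::finite \<Rightarrow> complex" where
  "sigma_ker n \<delta> x = (\<Sum>k\<le>n. complex_of_real
      (pochhammer (- real n) k / pochhammer (- real n - \<delta>) k) * S_poly k x)"

text \<open>Convolution on the torus w.r.t. normalized Haar measure
  dm = (2 pi)^(-N) d theta_1 ... d theta_N, y_j = e^(i theta_j), theta in [0, 2 pi]^N.\<close>
definition torus_conv ::
  "(complex ^ 'n::finite \<Rightarrow> complex) \<Rightarrow> (complex ^ 'n \<Rightarrow> complex) \<Rightarrow> complex ^ 'n \<Rightarrow> complex" where
  "torus_conv f g x =
     complex_of_real (1 / (2 * pi) ^ CARD('n)) *
     integral (cbox (0::real ^ 'n) (\<chi> i. 2 * pi))
       (\<lambda>\<theta>. f (\<chi> i. cis (\<theta> $ i)) * g (\<chi> i. x $ i / cis (\<theta> $ i)))"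

end

theory Submission
  imports Defs "HOL-Analysis.Analysis"
begin
lemma integral_lborel_prod:
  fixes f :: "'a::euclidean_space \<Rightarrow> real \<Rightarrow> complex"
  assumes "\<And>b. b \<in> Basis \<Longrightarrow> integrable lborel (f b)"
  shows "(\<integral>x. (\<Prod>b\<in>Basis. f b (x \<bullet> b)) \<partial>lborel) = (\<Prod>b\<in>Basis. (\<integral>x. f b x \<partial>lborel))"
    "integrable lborel (\<lambda>x. (\<Prod>b\<in>Basis. f b (x \<bullet> b)))"
proof -
  interpret product_sigma_finite "\<lambda>b. lborel::real measure" by standard
  have m[measurable]: "\<And>b. b \<in> Basis \<Longrightarrow> f b \<in> borel_measurable borel"
    using assms[THEN borel_measurable_integrable] by simp
  have "(\<integral>x. (\<Prod>b\<in>Basis. f b (x \<bullet> b)) \<partial>lborel) = 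
     (\<integral>x. (\<Prod>b\<in>Basis. f b (x b)) \<partial>(\<Pi>\<^sub>M b\<in>Basis. lborel))"
    apply (subst lborel_eq)
    apply (subst integral_distr)
    apply (auto simp: inner_sum_left_Basis inner_sum_left inner_Basis if_distrib cong: if_cong)
    done
  also have "\<dots> = (\<Prod>b\<in>Basis. (\<integral>x. f b x \<partial>lborel))"
    by (rule product_integral_prod) (auto simp: assms)
  finally show "(\<integral>x. (\<Prod>b\<in>Basis. f b (x \<bullet> b)) \<partial>lborel) = (\<Prod>b\<in>Basis. (\<integral>x. f b x \<partial>lborel))" .
  have "integrable (\<Pi>\<^sub>M b\<in>Basis. lborel) (\<lambda>x. (\<Prod>b\<in>Basis. f b (x b)))"
    by (rule product_integrable_prod) (auto simp: assms)
  then show "integrable lborel (\<lambda>x. (\<Prod>b\<in>Basis. f b (x \<bullet> b)))"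
    apply (subst lborel_eq)
    apply (subst integrable_distr_eq)
    apply (auto simp: inner_sum_left_Basis inner_sum_left inner_Basis if_distrib cong: if_cong)
    done
qed

lemma orth1:
  fixes m :: int
  shows "integral {0..2*pi} (\<lambda>t. cis (of_int m * t)) = (if m = 0 then 2*pi else 0)"
proof (cases "m = 0")
  case True then show ?thesis by (simp add: scaleR_conv_of_real)
next
  case False
  let ?F = "\<lambda>t. cis (of_int m * t) / (\<i> * of_int m)"
  have "((\<lambda>t. cis (of_int m * t)) has_integral (?F (2*pi) - ?F 0)) {0..2*pi}"
  proof (rule fundamental_theorem_of_calculus)
    fix x :: real assume "x \<in> {0..2*pi}"
    have "((\<lambda>t. cis (of_int m * t)) has_vector_derivative (\<i> * of_int m) * cis (of_int m * x)) (at x within {0..2*pi})"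
      unfolding has_vector_derivative_def
      by (rule has_derivative_eq_rhs[OF has_derivative_cis]) (auto intro!: derivative_eq_intros simp: fun_eq_iff scaleR_conv_of_real algebra_simps)
    then show "(?F has_vector_derivative cis (of_int m * x)) (at x within {0..2*pi})"
      using False by (auto intro!: derivative_eq_intros simp: field_simps)
  qed auto
  moreover have "cis (of_int m * (2 * pi)) = 1"
    using cis_multiple_2pi[of "of_int m"] by (simp add: mult.commute mult.left_commute)
  ultimately show ?thesis using False by (simp add: integral_unique)
qed

lemma orth1_lborel:
  fixes m :: int
  shows "integrable lborel (\<lambda>t. indicator {0..2*pi} t *\<^sub>R cis (of_int m * t))"
    "(\<integral>t. indicator {0..2*pi} t *\<^sub>R cis (of_int m * t) \<partial>lborel) = (if m = 0 then 2*pi else 0)"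
proof -
  have si: "set_integrable lborel {0..2*pi} (\<lambda>t. cis (of_int m * t))"
    unfolding set_integrable_def by (rule borel_integrable_compact) (auto intro!: continuous_intros)
  then show "integrable lborel (\<lambda>t. indicator {0..2*pi} t *\<^sub>R cis (of_int m * t))"
    by (simp add: set_integrable_def)
  have "(LINT t:{0..2*pi}|lborel. cis (of_int m * t)) = integral {0..2*pi} (\<lambda>t. cis (of_int m * t))"
    by (rule set_borel_integral_eq_integral[OF si])
  then show "(\<integral>t. indicator {0..2*pi} t *\<^sub>R cis (of_int m * t) \<partial>lborel) = (if m = 0 then 2*pi else 0)"
    by (simp add: set_lebesgue_integral_def orth1)
qed

lemma orthT:
  fixes \<xi> :: "int ^ 'n::finite"
  shows "integral (cbox (0::real^'n) (\<chi> i. 2*pi)) (\<lambda>\<theta>. \<Prod>i\<in>UNIV. cis (of_int (\<xi>$i) * \<theta>$i))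
     = (if \<xi> = 0 then (2*pi)^CARD('n) else 0)"
proof -
  define h where "h b t = indicator {0..2*pi} t *\<^sub>R cis (of_int (\<xi> $ axis_index b) * t)" for b :: "real^'n" and t :: real
  have eqf: "(\<lambda>\<theta>. if \<theta> \<in> cbox (0::real^'n) (\<chi> i. 2*pi) then \<Prod>i\<in>UNIV. cis (of_int (\<xi>$i) * \<theta>$i) else 0)
     = (\<lambda>\<theta>. \<Prod>b\<in>Basis. h b (\<theta> \<bullet> b))"
  proof
    fix \<theta> :: "real^'n"
    have "(\<Prod>b\<in>Basis. h b (\<theta> \<bullet> b)) = (\<Prod>i\<in>UNIV. h (axis i 1) (\<theta> $ i))"
      by (simp add: Basis_vec_def UNION_singleton_eq_range prod.reindex axis_eq_axis inj_on_def cart_eq_inner_axis)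
    also have "\<dots> = (if \<theta> \<in> cbox (0::real^'n) (\<chi> i. 2*pi) then \<Prod>i\<in>UNIV. cis (of_int (\<xi>$i) * \<theta>$i) else 0)"
    proof (cases "\<theta> \<in> cbox (0::real^'n) (\<chi> i. 2*pi)")
      case True
      then show ?thesis by (auto simp: h_def mem_box_cart intro!: prod.cong)
    next
      case False
      then obtain i where "\<not> (0 \<le> \<theta>$i \<and> \<theta>$i \<le> 2*pi)" by (auto simp: mem_box_cart)
      then have "h (axis i 1) (\<theta> $ i) = 0" by (simp add: h_def)
      then show ?thesis using False by (simp add: prod_zero_iff) (metis UNIV_I)
    qed
    finally show "(if \<theta> \<in> cbox (0::real^'n) (\<chi> i. 2*pi) then \<Prod>i\<in>UNIV. cis (of_int (\<xi>$i) * \<theta>$i) else 0)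
     = (\<Prod>b\<in>Basis. h b (\<theta> \<bullet> b))" by simp
  qed
  have hint: "\<And>b. b \<in> Basis \<Longrightarrow> integrable lborel (h b)"
    unfolding h_def by (rule orth1_lborel)
  have "integral (cbox (0::real^'n) (\<chi> i. 2*pi)) (\<lambda>\<theta>. \<Prod>i\<in>UNIV. cis (of_int (\<xi>$i) * \<theta>$i))
     = integral UNIV (\<lambda>\<theta>. \<Prod>b\<in>Basis. h b (\<theta> \<bullet> b))"
    by (subst eqf[symmetric]) (simp add: integral_restrict_UNIV)
  also have "\<dots> = (\<integral>\<theta>. (\<Prod>b\<in>Basis. h b (\<theta> \<bullet> b)) \<partial>lborel)"
    by (rule integral_lborel) (rule integral_lborel_prod(2)[OF hint])
  also have "\<dots> = (\<Prod>b\<in>Basis. (\<integral>t. h b t \<partial>lborel))"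
    by (rule integral_lborel_prod(1)[OF hint])
  also have "\<dots> = (\<Prod>i\<in>UNIV. (\<integral>t. h (axis i 1) t \<partial>lborel))"
    by (simp add: Basis_vec_def UNION_singleton_eq_range prod.reindex axis_eq_axis inj_on_def)
  also have "\<dots> = (\<Prod>i\<in>UNIV. (if \<xi>$i = 0 then complex_of_real (2*pi) else 0))"
    unfolding h_def by (intro prod.cong refl) (simp add: orth1_lborel(2))
  also have "\<dots> = (if \<xi> = 0 then (2*pi)^CARD('n) else 0)"
  proof (cases "\<xi> = 0")
    case True then show ?thesis by simp
  next
    case False
    then obtain i where "\<xi>$i \<noteq> 0" by (auto simp: vec_eq_iff)
    then show ?thesis using False by (simp add: prod_zero_iff) (metis UNIV_I)
  qed
  finally show ?thesis .
qed

definition Sset :: "'a set \<Rightarrow> nat \<Rightarrow> ('a \<Rightarrow> nat) set" where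
  "Sset I m = {g \<in> PiE I (\<lambda>_. {..m}). sum g I = m}"

lemma finite_Sset: "finite I \<Longrightarrow> finite (Sset I m)"
  unfolding Sset_def by (rule finite_subset[OF _ finite_PiE[of I "\<lambda>_. {..m}"]]) auto

lemma card_Sset:
  assumes "finite I" "I \<noteq> {}"
  shows "card (Sset I m) = (m + card I - 1) choose m"
  using assms
proof (induction I arbitrary: m rule: finite_ne_induct)
  case (singleton a)
  have "Sset {a} m = {restrict (\<lambda>_. m) {a}}"
    unfolding Sset_def by (auto simp: PiE_iff extensional_def restrict_def fun_eq_iff)
  then show ?case by simp
next
  case (insert a I)
  let ?c = "card I"
  have c1: "?c \<ge> 1" using insert by (simp add: Suc_leI card_gt_0_iff)
  have bij: "bij_betw (\<lambda>(j,h). h(a:=j)) (SIGMA j:{..m}. Sset I (m - j)) (Sset (insert a I) m)"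
  proof (rule bij_betw_byWitness[where f'="\<lambda>g. (g a, restrict g I)"])
    show "\<forall>x\<in>(SIGMA j:{..m}. Sset I (m - j)). (\<lambda>g. (g a, restrict g I)) ((\<lambda>(j,h). h(a:=j)) x) = x"
      using \<open>a \<notin> I\<close> by (auto simp: Sset_def PiE_iff extensional_def restrict_def fun_eq_iff)
    show "\<forall>g\<in>Sset (insert a I) m. (\<lambda>(j,h). h(a:=j)) (g a, restrict g I) = g"
      using \<open>a \<notin> I\<close> by (auto simp: Sset_def PiE_iff extensional_def restrict_def fun_eq_iff)
    show "(\<lambda>(j,h). h(a:=j)) ` (SIGMA j:{..m}. Sset I (m - j)) \<subseteq> Sset (insert a I) m"
    proof -
      have *: "h(a:=j) \<in> Sset (insert a I) m" if j: "j \<in> {..m}" and h: "h \<in> Sset I (m - j)" for j h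
      proof -
      have "sum (h(a:=j)) (insert a I) = j + sum h I"
        using insert.hyps by (simp add: sum.insert_if) (intro sum.cong, auto)
      with j h show "h(a:=j) \<in> Sset (insert a I) m"
        by (auto simp: Sset_def PiE_iff extensional_def)
      qed
      then show ?thesis by auto
    qed
    show "(\<lambda>g. (g a, restrict g I)) ` Sset (insert a I) m \<subseteq> (SIGMA j:{..m}. Sset I (m - j))"
    proof (rule image_subsetI)
      fix g assume g: "g \<in> Sset (insert a I) m"
      have s: "sum g (insert a I) = g a + sum g I" using insert.hyps by simp
      have le: "\<forall>i\<in>I. g i \<le> sum g I" using insert.hyps by (simp add: member_le_sum)
      from g s le \<open>a \<notin> I\<close> show "(g a, restrict g I) \<in> (SIGMA j:{..m}. Sset I (m - j))"
        by (auto simp: Sset_def PiE_iff extensional_def)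
    qed
  qed
  have "card (Sset (insert a I) m) = card (SIGMA j:{..m}. Sset I (m - j))"
    using bij_betw_same_card[OF bij] by simp
  also have "\<dots> = (\<Sum>j\<le>m. card (Sset I (m - j)))"
    using insert by (simp add: finite_Sset)
  also have "\<dots> = (\<Sum>j\<le>m. ((?c - 1) + (m - j)) choose (m - j))"
    using insert c1 by (intro sum.cong) (auto simp: add.commute)
  also have "\<dots> = (\<Sum>j\<le>m. ((?c - 1) + j) choose j)"
    using sum.nat_diff_reindex[of "\<lambda>j. ((?c - 1) + j) choose j" "Suc m"]
    by (simp add: lessThan_Suc_atMost)
  also have "\<dots> = Suc (?c - 1 + m) choose m" by (rule sum_choose_lower)
  also have "\<dots> = (m + card (insert a I) - 1) choose m"
    using insert c1 by (simp add: add.commute)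
  finally show ?case .
qed

lemma poch_ratio:
  fixes n k d :: nat
  assumes "k \<le> n"
  shows "pochhammer (- real n) k / pochhammer (- real n - real d) k
       = real ((n - k + d) choose (n - k)) / real ((n + d) choose n)"
  using assms
proof (induction k)
  case 0
  then show ?case by simp
next
  case (Suc k)
  then have kn: "k < n" by simp
  define m where "m = n - Suc k"
  have nk: "n - k = Suc m" using kn m_def by simp
  have pos: "real ((n + d) choose n) > 0" by simp
  have den: "- real n - real d + real k \<noteq> 0" using kn by simp
  have p0: "pochhammer (- real n - real d) k \<noteq> 0"
  proof -
    have "- real n - real d \<noteq> - real j" if "j < k" for j
    proof -
      have "real j < real n" using that kn by simp
      then show ?thesis by simp
    qed
    then show ?thesis by (simp add: pochhammer_eq_0_iff)
  qed
  have b: "real (Suc (m + d)) * real ((m + d) choose m) = real ((Suc (m+d)) choose (Suc m)) * real (Suc m)"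
    using Suc_times_binomial_eq[of "m+d" m] by (metis of_nat_mult)
  have "pochhammer (- real n) (Suc k) / pochhammer (- real n - real d) (Suc k)
     = (pochhammer (- real n) k / pochhammer (- real n - real d) k) * ((- real n + real k) / (- real n - real d + real k))"
    using p0 den by (simp add: pochhammer_Suc field_simps)
  also have "\<dots> = real ((Suc m + d) choose (Suc m)) / real ((n + d) choose n) * ((- real n + real k) / (- real n - real d + real k))"
  proof -
    have "n - k + d = Suc m + d" using nk by simp
    then show ?thesis using Suc.IH kn nk by (simp del: binomial_Suc_Suc)
  qed
  also have "\<dots> = real ((Suc m + d) choose (Suc m)) / real ((n + d) choose n) * (real (Suc m) / real (Suc m + d))"
  proof -
    have "real n = real k + real (Suc m)" using nk kn by (metis add_diff_inverse_nat less_imp_le not_le of_nat_add)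
    then have "(- real n + real k) / (- real n - real d + real k) = real (Suc m) / real (Suc m + d)"
      by (simp add: field_simps)
    then show ?thesis by (simp only:)
  qed
  also have "\<dots> = real ((m + d) choose m) / real ((n + d) choose n)"
  proof -
    have "real ((Suc m + d) choose Suc m) * real (Suc m) / real (Suc m + d) = real ((m+d) choose m)"
      using b by (simp add: field_simps del: binomial_Suc_Suc of_nat_Suc)
    then show ?thesis by (simp del: binomial_Suc_Suc of_nat_Suc add: field_simps)
  qed
  finally show ?case by (simp add: m_def)
qed

definition Bs :: "nat \<Rightarrow> (int ^ 'n::finite) set" where
  "Bs m = {\<beta>. (\<forall>i. 0 \<le> \<beta>$i) \<and> (\<Sum>i\<in>UNIV. \<beta>$i) = int m}"

lemma Bs_le: assumes "\<beta> \<in> Bs m" shows "\<beta>$i \<le> int m"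
proof -
  have "\<beta>$i \<le> (\<Sum>i\<in>UNIV. \<beta>$i)"
    using assms by (intro member_le_sum) (auto simp: Bs_def)
  then show ?thesis using assms by (simp add: Bs_def)
qed

lemma bij_Sset_Bs: "bij_betw (\<lambda>g. \<chi> i. int (g i)) (Sset (UNIV::'n::finite set) m) (Bs m)"
proof (rule bij_betw_byWitness[where f'="\<lambda>\<beta>. (\<lambda>i. nat (\<beta>$i))"])
  show "\<forall>g\<in>Sset (UNIV::'n set) m. (\<lambda>i. nat ((\<chi> i. int (g i)) $ i)) = g" by auto
  show "\<forall>\<beta>\<in>Bs m. (\<chi> i. int (nat (\<beta> $ i))) = (\<beta>::int^'n)" by (auto simp: Bs_def vec_eq_iff)
  show "(\<lambda>g. \<chi> i. int (g i)) ` Sset (UNIV::'n set) m \<subseteq> Bs m"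
  proof (rule image_subsetI)
    fix g assume g: "g \<in> Sset (UNIV::'n set) m"
    then have "sum g UNIV = m" by (simp add: Sset_def)
    then have "(\<Sum>i\<in>UNIV. int (g i)) = int m" by (metis of_nat_sum)
    then show "(\<chi> i. int (g i)) \<in> Bs m" by (simp add: Bs_def)
  qed
  show "(\<lambda>\<beta>. (\<lambda>i. nat (\<beta>$i))) ` Bs m \<subseteq> Sset (UNIV::'n set) m"
  proof (rule image_subsetI)
    fix \<beta> :: "int^'n" assume b: "\<beta> \<in> Bs m"
    have "int (\<Sum>i\<in>UNIV. nat (\<beta>$i)) = (\<Sum>i\<in>UNIV. \<beta>$i)"
      using b by (simp add: of_nat_sum Bs_def)
    also have "\<dots> = int m" using b by (simp add: Bs_def)
    finally have "(\<Sum>i\<in>UNIV. nat (\<beta>$i)) = m" by (simp only: of_nat_eq_iff)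
    moreover have "\<forall>i. nat (\<beta>$i) \<le> m" using Bs_le[OF b] by (simp add: nat_le_iff)
    ultimately show "(\<lambda>i. nat (\<beta>$i)) \<in> Sset UNIV m"
      by (simp add: Sset_def PiE_iff)
  qed
qed

lemma finite_Bs: "finite (Bs m :: (int^'n::finite) set)"
  using bij_betw_finite[OF bij_Sset_Bs] finite_Sset[of "UNIV::'n set"] by auto

lemma card_Bs: "card (Bs m :: (int^'n::finite) set) = (m + CARD('n) - 1) choose m"
proof -
  have "card (Sset (UNIV::'n set) m) = card (Bs m :: (int^'n::finite) set)"
    by (rule bij_betw_same_card[OF bij_Sset_Bs])
  moreover have "card (Sset (UNIV::'n set) m) = (m + CARD('n) - 1) choose m"
    by (rule card_Sset) auto
  ultimately show ?thesis by metis
qed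

lemma card_Bs_pos: "card (Bs m :: (int^'n::finite) set) > 0"
proof -
  have "CARD('n) > 0" by simp
  then have "m \<le> m + CARD('n) - 1" by linarith
  then show ?thesis by (simp add: card_Bs)
qed

lemma finite_vec_set:
  assumes "finite A"
  shows "finite {\<alpha>::'a^'n::finite. \<forall>i. \<alpha>$i \<in> A}"
proof -
  have "{\<alpha>::'a^'n::finite. \<forall>i. \<alpha>$i \<in> A} \<subseteq> vec_lambda ` (PiE UNIV (\<lambda>_. A))"
  proof
    fix \<alpha> :: "'a^'n" assume "\<alpha> \<in> {\<alpha>. \<forall>i. \<alpha>$i \<in> A}"
    then have "vec_nth \<alpha> \<in> PiE UNIV (\<lambda>_. A)" by auto
    then show "\<alpha> \<in> vec_lambda ` (PiE UNIV (\<lambda>_. A))"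
      by (metis image_eqI vec_lambda_eta)
  qed
  then show ?thesis
    by (rule finite_subset) (intro finite_imageI finite_PiE assms, simp)
qed

lemma finite_Zset: "finite (Zset k :: (int^'n::finite) set)"
proof -
  have "Zset k \<subseteq> {\<alpha>::int^'n. \<forall>i. \<alpha>$i \<in> {-2*int k..2*int k}}"
  proof safe
    fix \<alpha> :: "int^'n" and i assume a: "\<alpha> \<in> Zset k"
    have "\<bar>\<alpha>$i\<bar> \<le> (\<Sum>i\<in>UNIV. \<bar>\<alpha> $ i\<bar>)" by (rule member_le_sum) auto
    then have "\<bar>\<alpha>$i\<bar> \<le> 2 * int k" using a by (simp add: Zset_def)
    then show "\<alpha>$i \<in> {-2*int k..2*int k}" by auto
  qed
  then show ?thesis by (rule finite_subset) (rule finite_vec_set, simp)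
qed

definition pos :: "int^'n::finite \<Rightarrow> int^'n" where "pos \<alpha> = (\<chi> i. max (\<alpha>$i) 0)"
definition neg :: "int^'n::finite \<Rightarrow> int^'n" where "neg \<alpha> = (\<chi> i. max (- (\<alpha>$i)) 0)"
definition mn :: "int^'n::finite \<Rightarrow> int^'n \<Rightarrow> int^'n" where "mn \<beta> \<gamma> = (\<chi> i. min (\<beta>$i) (\<gamma>$i))"

definition Pset :: "nat \<Rightarrow> (nat \<times> (int^'n::finite) \<times> (int^'n)) set" where
  "Pset n = (SIGMA k:{..n}. Zset k \<times> Bs (n - k))"

definition Fm :: "nat \<times> (int^'n::finite) \<times> (int^'n) \<Rightarrow> (int^'n) \<times> (int^'n)" where
  "Fm x = (case x of (k, \<alpha>, \<delta>) \<Rightarrow> (pos \<alpha> + \<delta>, neg \<alpha> + \<delta>))"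

definition Gm :: "nat \<Rightarrow> (int^'n::finite) \<times> (int^'n) \<Rightarrow> nat \<times> (int^'n) \<times> (int^'n)" where
  "Gm n y = (case y of (\<beta>, \<gamma>) \<Rightarrow> (n - nat (\<Sum>i\<in>UNIV. mn \<beta> \<gamma> $ i), \<beta> - \<gamma>, mn \<beta> \<gamma>))"

lemma pos_minus_neg[simp]: "pos \<alpha> - neg \<alpha> = \<alpha>"
  by (auto simp: pos_def neg_def vec_eq_iff max_def)

lemma pos_neg_delta: "(pos \<alpha> + \<delta>) - (neg \<alpha> + \<delta>) = \<alpha>"
  using pos_minus_neg[of \<alpha>] by (simp add: algebra_simps)

lemma sum_pos_neg:
  assumes "\<alpha> \<in> Zset k"
  shows "(\<Sum>i\<in>UNIV. pos \<alpha> $ i) = int k" "(\<Sum>i\<in>UNIV. neg \<alpha> $ i) = int k"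
proof -
  have e1: "(\<Sum>i\<in>UNIV. pos \<alpha> $ i) - (\<Sum>i\<in>UNIV. neg \<alpha> $ i) = (\<Sum>i\<in>UNIV. \<alpha> $ i)"
    unfolding sum_subtractf[symmetric] by (intro sum.cong) (auto simp: pos_def neg_def)
  have e2: "(\<Sum>i\<in>UNIV. pos \<alpha> $ i) + (\<Sum>i\<in>UNIV. neg \<alpha> $ i) = (\<Sum>i\<in>UNIV. \<bar>\<alpha> $ i\<bar>)"
    unfolding sum.distrib[symmetric] by (intro sum.cong) (auto simp: pos_def neg_def)
  from e1 e2 assms show "(\<Sum>i\<in>UNIV. pos \<alpha> $ i) = int k" "(\<Sum>i\<in>UNIV. neg \<alpha> $ i) = int k"
    by (simp_all add: Zset_def)
qed

lemma bij_Fm: "bij_betw Fm (Pset n) (Bs n \<times> (Bs n :: (int^'n::finite) set))"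
proof (rule bij_betw_byWitness[where f'="Gm n"])
  show "\<forall>x\<in>Pset n. Gm n (Fm x) = x"
  proof
    fix x assume "x \<in> Pset n"
    then obtain k \<alpha> \<delta> where x: "x = (k, \<alpha>, \<delta>)" and k: "k \<le> n" and a: "\<alpha> \<in> Zset k" and d: "\<delta> \<in> Bs (n - k)"
      by (auto simp: Pset_def)
    have mn: "mn (pos \<alpha> + \<delta>) (neg \<alpha> + \<delta>) = \<delta>"
      using d by (auto simp: mn_def pos_def neg_def vec_eq_iff Bs_def)
    have df: "(pos \<alpha> + \<delta>) - (neg \<alpha> + \<delta>) = \<alpha>"
      by (rule pos_neg_delta)
    have "(\<Sum>i\<in>UNIV. \<delta> $ i) = int (n - k)" using d by (simp add: Bs_def)
    then have "n - nat (\<Sum>i\<in>UNIV. \<delta> $ i) = k" using k by simp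
    then show "Gm n (Fm x) = x" by (simp add: x Fm_def Gm_def mn df)
  qed
  show "\<forall>y\<in>Bs n \<times> Bs n. Fm (Gm n y) = y"
    by (auto simp: Fm_def Gm_def pos_def neg_def mn_def vec_eq_iff)
  show "Fm ` Pset n \<subseteq> Bs n \<times> Bs n"
  proof (rule image_subsetI)
    fix x assume "x \<in> Pset n"
    then obtain k \<alpha> \<delta> where x: "x = (k, \<alpha>, \<delta>)" and k: "k \<le> n" and a: "\<alpha> \<in> Zset k" and d: "\<delta> \<in> Bs (n - k)"
      by (auto simp: Pset_def)
    have sd: "(\<Sum>i\<in>UNIV. \<delta> $ i) = int (n - k)" using d by (simp add: Bs_def)
    have "(\<Sum>i\<in>UNIV. (pos \<alpha> + \<delta>) $ i) = int n"
      using sum_pos_neg[OF a] sd k by (simp add: sum.distrib)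
    moreover have "(\<Sum>i\<in>UNIV. (neg \<alpha> + \<delta>) $ i) = int n"
      using sum_pos_neg[OF a] sd k by (simp add: sum.distrib)
    ultimately show "Fm x \<in> Bs n \<times> Bs n"
      using d by (auto simp: x Fm_def Bs_def pos_def neg_def add_nonneg_nonneg)
  qed
  show "Gm n ` ((Bs n :: (int^'n) set) \<times> Bs n) \<subseteq> Pset n"
  proof (rule image_subsetI)
    fix y assume "y \<in> (Bs n :: (int^'n) set) \<times> (Bs n :: (int^'n) set)"
    then obtain \<beta> \<gamma> where y: "y = (\<beta>, \<gamma>)" and b: "\<beta> \<in> Bs n" and c: "\<gamma> \<in> Bs n" by auto
    define s where "s = (\<Sum>i\<in>UNIV. mn \<beta> \<gamma> $ i)"
    have s0: "s \<ge> 0" unfolding s_def using b c by (intro sum_nonneg) (auto simp: mn_def Bs_def)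
    have sn: "s \<le> int n"
    proof -
      have "s \<le> (\<Sum>i\<in>UNIV. \<beta> $ i)" unfolding s_def by (intro sum_mono) (auto simp: mn_def)
      then show ?thesis using b by (simp add: Bs_def)
    qed
    define k where "k = n - nat s"
    have kn: "k \<le> n" by (simp add: k_def)
    have nk: "int (n - k) = s" using s0 sn by (simp add: k_def)
    have "(\<Sum>i\<in>UNIV. (\<beta> - \<gamma>) $ i) = 0"
      using b c by (simp add: sum_subtractf Bs_def)
    moreover have "(\<Sum>i\<in>UNIV. \<bar>(\<beta> - \<gamma>) $ i\<bar>) = 2 * int k"
    proof -
      have "(\<Sum>i\<in>UNIV. \<bar>(\<beta> - \<gamma>) $ i\<bar>) = (\<Sum>i\<in>UNIV. \<beta> $ i + \<gamma> $ i - 2 * mn \<beta> \<gamma> $ i)"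
        by (intro sum.cong) (auto simp: mn_def)
      also have "\<dots> = (\<Sum>i\<in>UNIV. \<beta> $ i) + (\<Sum>i\<in>UNIV. \<gamma> $ i) - 2 * s"
        by (simp add: s_def sum_subtractf sum.distrib sum_distrib_left)
      also have "\<dots> = 2 * int k" using b c nk kn by (simp add: Bs_def of_nat_diff)
      finally show ?thesis .
    qed
    ultimately have z: "\<beta> - \<gamma> \<in> Zset k" by (simp add: Zset_def)
    have m: "mn \<beta> \<gamma> \<in> Bs (n - k)"
      using b c nk by (auto simp: Bs_def mn_def s_def)
    show "Gm n y \<in> Pset n"
      using z m kn by (simp add: y Gm_def Pset_def k_def s_def)
  qed
qed

lemma double_sum:
  fixes g :: "int^'n::finite \<Rightarrow> 'a::comm_ring_1"
  shows "(\<Sum>\<beta>\<in>Bs n. \<Sum>\<gamma>\<in>Bs n. g (\<beta> - \<gamma>)) = (\<Sum>k\<le>n. of_nat (card (Bs (n - k) :: (int^'n) set)) * (\<Sum>\<alpha>\<in>Zset k. g \<alpha>))"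
proof -
  have "(\<Sum>\<beta>\<in>Bs n. \<Sum>\<gamma>\<in>Bs n. g (\<beta> - \<gamma>)) = (\<Sum>y\<in>Bs n \<times> Bs n. (\<lambda>(\<beta>,\<gamma>). g (\<beta> - \<gamma>)) y)"
    by (simp add: sum.cartesian_product)
  also have "\<dots> = (\<Sum>x\<in>Pset n. (\<lambda>(\<beta>,\<gamma>). g (\<beta> - \<gamma>)) (Fm x))"
    by (rule sum.reindex_bij_betw[OF bij_Fm, symmetric])
  also have "\<dots> = (\<Sum>x\<in>(Pset n :: (nat \<times> (int^'n) \<times> (int^'n)) set). (\<lambda>(k,\<alpha>,\<delta>). g \<alpha>) x)"
    by (intro sum.cong) (auto simp: Fm_def pos_neg_delta)
  also have "\<dots> = (\<Sum>k\<le>n. \<Sum>y\<in>Zset k \<times> (Bs (n - k) :: (int^'n) set). (\<lambda>(\<alpha>,\<delta>). g \<alpha>) y)"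
    unfolding Pset_def by (subst sum.Sigma[symmetric]) (auto simp: finite_Zset finite_Bs split_def)
  also have "\<dots> = (\<Sum>k\<le>n. of_nat (card (Bs (n - k) :: (int^'n) set)) * (\<Sum>\<alpha>\<in>Zset k. g \<alpha>))"
    by (intro sum.cong refl) (simp add: sum.cartesian_product[symmetric] sum_distrib_left)
  finally show ?thesis .
qed

lemma norm1_inverse: fixes z :: complex assumes "norm z = 1" shows "inverse z = cnj z"
proof -
  have "z * cnj z = 1" using complex_norm_square[of z] assms by simp
  then show ?thesis by (metis inverse_unique)
qed

lemma torus_norm: "w \<in> torus \<Longrightarrow> norm (w $ i) = 1"
  by (simp add: torus_def)

lemma torus_nz: "w \<in> torus \<Longrightarrow> w $ i \<noteq> 0"
  using torus_norm[of w i] by auto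

lemma mp_zero[simp]: "monom_pow w 0 = 1"
  by (simp add: monom_pow_def)

lemma mp_add: assumes "w \<in> torus" shows "monom_pow w (a + b) = monom_pow w a * monom_pow w b"
  unfolding monom_pow_def using torus_nz[OF assms]
  by (simp add: power_int_add prod.distrib)

lemma mp_uminus: assumes "w \<in> torus" shows "monom_pow w (- a) = cnj (monom_pow w a)"
proof -
  have "w $ i powi (- (a $ i)) = cnj (w $ i powi (a $ i))" for i
  proof -
    have n: "norm (w $ i powi (a $ i)) = 1" using assms by (simp add: torus_def norm_power_int)
    have "w $ i powi (- (a $ i)) = inverse (w $ i powi (a $ i))" by (simp add: power_int_minus)
    also have "\<dots> = cnj (w $ i powi (a $ i))" by (rule norm1_inverse[OF n])
    finally show ?thesis .
  qed
  then show ?thesis unfolding monom_pow_def by (simp add: cnj_prod)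
qed

lemma mp_diff: assumes "w \<in> torus" shows "monom_pow w (a - b) = monom_pow w a * cnj (monom_pow w b)"
  using mp_add[OF assms, of a "-b"] mp_uminus[OF assms, of b] by simp

lemma cis_in_torus: "(\<chi> i. cis (\<theta> $ i)) \<in> torus"
  by (simp add: torus_def)

lemma w_in_torus: "x \<in> torus \<Longrightarrow> (\<chi> i. x $ i / cis (\<theta> $ i)) \<in> torus"
  by (simp add: torus_def norm_divide)

lemma mp_w:
  assumes "x \<in> torus"
  shows "monom_pow (\<chi> i. x $ i / cis (\<theta> $ i)) \<xi> = monom_pow x \<xi> * (\<Prod>i\<in>UNIV. cis (of_int (- (\<xi> $ i)) * \<theta> $ i))"
proof -
  have "(x $ i / cis (\<theta> $ i)) powi (\<xi> $ i) = x $ i powi (\<xi> $ i) * cis (of_int (- (\<xi> $ i)) * \<theta> $ i)" for i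
  proof -
    have "(x $ i / cis (\<theta> $ i)) powi (\<xi> $ i) = x $ i powi (\<xi> $ i) / cis (\<theta> $ i) powi (\<xi> $ i)"
      by (simp add: power_int_divide_distrib)
    also have "\<dots> = x $ i powi (\<xi> $ i) * cis (of_int (- (\<xi> $ i)) * \<theta> $ i)"
    proof -
      have "inverse (cis (\<theta> $ i) powi (\<xi> $ i)) = cis (of_int (- (\<xi> $ i)) * \<theta> $ i)"
        by (simp add: cis_power_int cis_inverse)
      then show ?thesis by (simp add: divide_inverse)
    qed
    finally show ?thesis .
  qed
  then show ?thesis unfolding monom_pow_def by (simp add: prod.distrib)
qed

definition ev :: "'n::finite \<Rightarrow> int^'n" where "ev i = (\<chi> k. if k = i then 1 else 0)"

lemma mp_ev:
  assumes "w \<in> torus" "i \<noteq> j"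
  shows "monom_pow w (ev i - ev j) = w $ i / w $ j"
proof -
  have "monom_pow w (ev i - ev j) = (\<Prod>k\<in>UNIV. w $ k powi (if k = i then 1 else if k = j then -1 else 0))"
    unfolding monom_pow_def ev_def using assms(2) by (intro prod.cong) auto
  also have "\<dots> = (\<Prod>k\<in>UNIV. (if k = i then w $ i else 1) * (if k = j then inverse (w $ j) else 1))"
    using assms(2) by (intro prod.cong) (auto simp: power_int_minus)
  also have "\<dots> = w $ i / w $ j"
    by (simp add: prod.distrib prod.delta divide_inverse)
  finally show ?thesis .
qed

abbreviation TT :: "(real^'n::finite) set" where "TT \<equiv> cbox 0 (\<chi> i. 2*pi)"
definition wv :: "complex^'n::finite \<Rightarrow> real^'n \<Rightarrow> complex^'n" where
  "wv x \<theta> = (\<chi> i. x $ i / cis (\<theta> $ i))"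

lemma wv_torus: "x \<in> torus \<Longrightarrow> wv x \<theta> \<in> torus"
  unfolding wv_def by (rule w_in_torus)

lemma cont_mp: "x \<in> torus \<Longrightarrow> continuous_on S (\<lambda>\<theta>. monom_pow (wv x \<theta>) \<xi>)"
  unfolding wv_def mp_w by (intro continuous_intros)

lemma int_mp:
  fixes x :: "complex^'n::finite" and \<xi> :: "int^'n"
  assumes "x \<in> torus"
  shows "integral TT (\<lambda>\<theta>::real^'n. monom_pow (wv x \<theta>) \<xi>) = (if \<xi> = 0 then (2*pi)^CARD('n::finite) else 0)"
proof -
  have "integral TT (\<lambda>\<theta>::real^'n. monom_pow (wv x \<theta>) \<xi>)
      = monom_pow x \<xi> * integral TT (\<lambda>\<theta>::real^'n. \<Prod>i\<in>UNIV. cis (of_int ((- \<xi>) $ i) * \<theta> $ i))"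
    unfolding wv_def mp_w[OF assms] by simp
  also have "\<dots> = (if \<xi> = 0 then (2*pi)^CARD('n::finite) else 0)"
    by (subst orthT) (auto simp: neg_equal_0_iff_equal)
  finally show ?thesis .
qed

definition hs :: "nat \<Rightarrow> complex^'n::finite \<Rightarrow> complex" where
  "hs n w = (\<Sum>\<beta>\<in>Bs n. monom_pow w \<beta>)"

definition DD :: "nat \<Rightarrow> complex^'n::finite \<Rightarrow> complex" where
  "DD n w = (\<Sum>\<beta>\<in>Bs n. \<Sum>\<gamma>\<in>Bs n. monom_pow w (\<beta> - \<gamma>))"

definition sr :: "nat \<Rightarrow> complex^'n::finite \<Rightarrow> real" where
  "sr n w = (cmod (hs n w))^2 / real (card (Bs n :: (int^'n) set))"

lemma sr_nonneg: "sr n w \<ge> 0"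
  by (simp add: sr_def)

lemma sigma_DD:
  assumes "CARD('n::finite) \<ge> 1"
  shows "sigma_ker n (real CARD('n) - 1) (w :: complex^'n) = DD n w / of_nat (card (Bs n :: (int^'n) set))"
proof -
  define d where "d = CARD('n) - 1"
  have dd: "real CARD('n) - 1 = real d" using assms by (simp add: d_def of_nat_diff)
  have cB: "card (Bs m :: (int^'n) set) = (m + d) choose m" for m
    using assms by (simp add: card_Bs d_def)
  have c0: "real (card (Bs n :: (int^'n) set)) \<noteq> 0" using card_Bs_pos[where 'n='n, of n] by simp
  have "sigma_ker n (real CARD('n) - 1) w
      = (\<Sum>k\<le>n. complex_of_real (real (card (Bs (n - k) :: (int^'n) set)) / real (card (Bs n :: (int^'n) set))) * S_poly k w)"
    unfolding sigma_ker_def dd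
    by (intro sum.cong refl) (simp add: poch_ratio cB)
  also have "\<dots> = (\<Sum>k\<le>n. of_nat (card (Bs (n - k) :: (int^'n) set)) * S_poly k w) / of_nat (card (Bs n :: (int^'n) set))"
    by (simp add: sum_divide_distrib)
  also have "\<dots> = DD n w / of_nat (card (Bs n :: (int^'n) set))"
    unfolding DD_def S_poly_def by (subst double_sum) simp
  finally show ?thesis .
qed

lemma DD_hs: assumes "w \<in> torus" shows "DD n w = of_real ((cmod (hs n w))^2)"
proof -
  have "DD n w = (\<Sum>\<beta>\<in>Bs n. \<Sum>\<gamma>\<in>Bs n. monom_pow w \<beta> * cnj (monom_pow w \<gamma>))"
    unfolding DD_def using mp_diff[OF assms] by simp
  also have "\<dots> = hs n w * cnj (hs n w)"
    unfolding hs_def cnj_sum sum_product by simp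
  also have "\<dots> = of_real ((cmod (hs n w))^2)"
    using complex_norm_square[of "hs n w"] by simp
  finally show ?thesis .
qed

lemma sigma_sr:
  assumes "CARD('n::finite) \<ge> 1" "w \<in> torus"
  shows "sigma_ker n (real CARD('n) - 1) (w :: complex^'n) = of_real (sr n w)"
  using sigma_DD[OF assms(1)] DD_hs[OF assms(2)] by (simp add: sr_def)

lemma cont_DD: "x \<in> torus \<Longrightarrow> continuous_on S (\<lambda>\<theta>. DD n (wv x \<theta>))"
  unfolding DD_def by (intro continuous_on_sum cont_mp)

lemma int_DD:
  fixes x :: "complex^'n::finite"
  assumes "x \<in> torus"
  shows "integral TT (\<lambda>\<theta>::real^'n. DD n (wv x \<theta>)) = of_nat (card (Bs n :: (int^'n::finite) set)) * (2*pi)^CARD('n)"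
proof -
  have "integral TT (\<lambda>\<theta>::real^'n. DD n (wv x \<theta>)) = (\<Sum>\<beta>\<in>Bs n. \<Sum>\<gamma>\<in>Bs n. integral TT (\<lambda>\<theta>::real^'n. monom_pow (wv x \<theta>) (\<beta> - \<gamma>)))"
    unfolding DD_def
    by (simp add: integral_sum finite_Bs integrable_continuous cont_mp[OF assms] integrable_sum)
  also have "\<dots> = (\<Sum>\<beta>\<in>Bs n. \<Sum>\<gamma>\<in>(Bs n :: (int^'n) set). if \<beta> = \<gamma> then complex_of_real ((2*pi)^CARD('n)) else 0)"
    by (intro sum.cong refl) (simp add: int_mp[OF assms])
  also have "\<dots> = of_nat (card (Bs n :: (int^'n::finite) set)) * (2*pi)^CARD('n)"
    by (simp add: finite_Bs)
  finally show ?thesis .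
qed

lemma sum_ev: "(\<Sum>k\<in>UNIV. ev i $ k) = (1::int)"
  by (simp add: ev_def)

lemma count_ev:
  fixes i j :: "'n::finite"
  assumes "i \<noteq> j" "n \<ge> 1"
  shows "card {\<beta>\<in>(Bs n :: (int^'n) set). \<beta> + (ev i - ev j) \<in> Bs n} = card (Bs (n - 1) :: (int^'n) set)"
proof -
  have "bij_betw (\<lambda>\<beta>. \<beta> - ev j) {\<beta>\<in>(Bs n :: (int^'n) set). \<beta> + (ev i - ev j) \<in> Bs n} (Bs (n - 1))"
  proof (rule bij_betw_byWitness[where f'="\<lambda>\<gamma>. \<gamma> + ev j"])
    show "\<forall>a\<in>{\<beta>\<in>(Bs n :: (int^'n) set). \<beta> + (ev i - ev j) \<in> Bs n}. a - ev j + ev j = a" by simp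
    show "\<forall>a\<in>(Bs (n - 1) :: (int^'n) set). a + ev j - ev j = a" by simp
    show "(\<lambda>\<beta>. \<beta> - ev j) ` {\<beta>\<in>(Bs n :: (int^'n) set). \<beta> + (ev i - ev j) \<in> Bs n} \<subseteq> Bs (n - 1)"
    proof (rule image_subsetI)
      fix \<beta> :: "int^'n" assume b: "\<beta> \<in> {\<beta>\<in>(Bs n :: (int^'n) set). \<beta> + (ev i - ev j) \<in> Bs n}"
      then have b1: "\<beta> \<in> Bs n" and b2: "\<beta> + (ev i - ev j) \<in> Bs n" by auto
      have "(\<beta> + (ev i - ev j)) $ j \<ge> 0" using b2 by (simp add: Bs_def)
      then have bj: "\<beta> $ j \<ge> 1" using assms(1) by (simp add: ev_def)
      have nn: "\<forall>k. 0 \<le> (\<beta> - ev j) $ k"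
      proof
        fix k show "0 \<le> (\<beta> - ev j) $ k" using b1 bj by (cases "k = j") (auto simp: Bs_def ev_def)
      qed
      have "(\<Sum>k\<in>UNIV. (\<beta> - ev j) $ k) = (\<Sum>k\<in>UNIV. \<beta> $ k) - (\<Sum>k\<in>UNIV. ev j $ k)"
        by (simp add: sum_subtractf)
      also have "\<dots> = int (n - 1)" using b1 assms(2) by (simp add: Bs_def sum_ev of_nat_diff)
      finally show "\<beta> - ev j \<in> Bs (n - 1)" using nn by (simp add: Bs_def)
    qed
    show "(\<lambda>\<gamma>. \<gamma> + ev j) ` (Bs (n - 1) :: (int^'n) set) \<subseteq> {\<beta>\<in>(Bs n :: (int^'n) set). \<beta> + (ev i - ev j) \<in> Bs n}"
    proof (rule image_subsetI)
      fix \<gamma> :: "int^'n" assume c: "\<gamma> \<in> Bs (n - 1)"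
      have s1: "(\<Sum>k\<in>UNIV. (\<gamma> + ev j) $ k) = int n"
        using c assms(2) by (simp add: Bs_def sum.distrib sum_ev of_nat_diff)
      have s2: "(\<Sum>k\<in>UNIV. (\<gamma> + ev j + (ev i - ev j)) $ k) = int n"
        using c assms(2) by (simp add: Bs_def sum.distrib sum_subtractf sum_ev of_nat_diff)
      have n1: "\<forall>k. 0 \<le> (\<gamma> + ev j) $ k" using c by (auto simp: Bs_def ev_def)
      have n2: "\<forall>k. 0 \<le> (\<gamma> + ev j + (ev i - ev j)) $ k" using c by (auto simp: Bs_def ev_def)
      show "\<gamma> + ev j \<in> {\<beta>\<in>(Bs n :: (int^'n) set). \<beta> + (ev i - ev j) \<in> Bs n}"
        using s1 s2 n1 n2 by (simp add: Bs_def)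
    qed
  qed
  then show ?thesis by (rule bij_betw_same_card)
qed

lemma ratio1:
  assumes "n \<ge> 1" "CARD('n::finite) \<ge> 1"
  shows "real (card (Bs (n - 1) :: (int^'n) set)) / real (card (Bs n :: (int^'n) set))
       = real n / (real n + real CARD('n) - 1)"
proof -
  define d where "d = CARD('n) - 1"
  have cB: "card (Bs m :: (int^'n) set) = (m + d) choose m" for m
    using assms by (simp add: card_Bs d_def)
  have "real (card (Bs (n - 1) :: (int^'n) set)) / real (card (Bs n :: (int^'n) set))
      = pochhammer (- real n) 1 / pochhammer (- real n - real d) 1"
    using poch_ratio[of 1 n d] assms by (simp add: cB)
  also have "\<dots> = real n / (real n + real CARD('n) - 1)"
    using assms by (simp add: d_def of_nat_diff divide_simps) (simp add: algebra_simps)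
  finally show ?thesis .
qed

lemma int_DD_mp:
  fixes x :: "complex^'n::finite" and d :: "int^'n"
  assumes "x \<in> torus"
  shows "integral TT (\<lambda>\<theta>::real^'n. DD n (wv x \<theta>) * monom_pow (wv x \<theta>) d)
     = of_nat (card {\<beta>\<in>(Bs n :: (int^'n) set). \<beta> + d \<in> Bs n}) * (2*pi)^CARD('n)"
proof -
  have "integral TT (\<lambda>\<theta>::real^'n. DD n (wv x \<theta>) * monom_pow (wv x \<theta>) d)
      = integral TT (\<lambda>\<theta>::real^'n. \<Sum>\<beta>\<in>Bs n. \<Sum>\<gamma>\<in>Bs n. monom_pow (wv x \<theta>) (\<beta> - \<gamma> + d))"
    unfolding DD_def sum_distrib_right using mp_add[OF wv_torus[OF assms]] by simp
  also have "\<dots> = (\<Sum>\<beta>\<in>Bs n. \<Sum>\<gamma>\<in>Bs n. integral TT (\<lambda>\<theta>::real^'n. monom_pow (wv x \<theta>) (\<beta> - \<gamma> + d)))"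
    by (simp add: integral_sum finite_Bs integrable_continuous cont_mp[OF assms] integrable_sum)
  also have "\<dots> = (\<Sum>\<beta>\<in>Bs n. \<Sum>\<gamma>\<in>(Bs n :: (int^'n) set). if \<gamma> = \<beta> + d then complex_of_real ((2*pi)^CARD('n)) else 0)"
  proof (intro sum.cong refl)
    fix \<beta> \<gamma> :: "int^'n"
    have "(\<beta> - \<gamma> + d = 0) = (\<gamma> = \<beta> + d)" by (auto simp: algebra_simps)
    then show "integral TT (\<lambda>\<theta>::real^'n. monom_pow (wv x \<theta>) (\<beta> - \<gamma> + d)) = 
       (if \<gamma> = \<beta> + d then complex_of_real ((2*pi)^CARD('n)) else 0)"
      by (simp add: int_mp[OF assms])
  qed
  also have "\<dots> = (\<Sum>\<beta>\<in>(Bs n :: (int^'n) set). if \<beta> + d \<in> Bs n then complex_of_real ((2*pi)^CARD('n)) else 0)"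
    by (intro sum.cong refl) (simp add: finite_Bs)
  also have "\<dots> = of_nat (card {\<beta>\<in>(Bs n :: (int^'n) set). \<beta> + d \<in> Bs n}) * (2*pi)^CARD('n)"
    by (simp add: sum.inter_filter[symmetric] finite_Bs)
  finally show ?thesis .
qed

definition Phi :: "complex^'n::finite \<Rightarrow> real" where
  "Phi w = (\<Sum>i\<in>UNIV. \<Sum>j\<in>UNIV. (cmod (w $ i - w $ j))^2)"

lemma Phi_nonneg: "Phi w \<ge> 0"
  unfolding Phi_def by (intro sum_nonneg) auto

lemma Phi_term:
  assumes "w \<in> torus"
  shows "complex_of_real ((cmod (w $ i - w $ j))^2)
    = (if i = j then 0 else 2 - monom_pow w (ev i - ev j) - monom_pow w (ev j - ev i))"
proof (cases "i = j")
  case True then show ?thesis by simp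
next
  case False
  have a: "norm (w $ i) = 1" and b: "norm (w $ j) = 1" using assms by (auto simp: torus_def)
  have ca: "cnj (w $ i) = inverse (w $ i)" using norm1_inverse[OF a] by simp
  have cb: "cnj (w $ j) = inverse (w $ j)" using norm1_inverse[OF b] by simp
  have na: "w $ i \<noteq> 0" and nb: "w $ j \<noteq> 0" using a b by auto
  have "complex_of_real ((cmod (w $ i - w $ j))^2) = (w $ i - w $ j) * cnj (w $ i - w $ j)"
    using complex_norm_square[of "w $ i - w $ j"] by simp
  also have "\<dots> = 2 - w $ i / w $ j - w $ j / w $ i"
    using na nb by (simp add: ca cb field_simps)
  finally show ?thesis using False by (simp add: mp_ev[OF assms])
qed

lemma cont_hs: "x \<in> torus \<Longrightarrow> continuous_on S (\<lambda>\<theta>. hs n (wv x \<theta>))"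
  unfolding hs_def by (intro continuous_on_sum cont_mp)

lemma cont_wv_nth: "continuous_on S (\<lambda>\<theta>. wv x \<theta> $ i)"
  unfolding wv_def by simp (intro continuous_intros, simp)

lemma cont_Phi: "continuous_on S (\<lambda>\<theta>. Phi (wv x \<theta>))"
  unfolding Phi_def by (intro continuous_intros cont_wv_nth)

lemma cont_sr: "x \<in> torus \<Longrightarrow> continuous_on S (\<lambda>\<theta>. sr n (wv x \<theta>))"
  unfolding sr_def by (intro continuous_intros cont_hs) (auto intro: card_Bs_pos)

lemma sr_DD: fixes w :: "complex^'n::finite" assumes "w \<in> torus"
  shows "complex_of_real (sr n w) = DD n w / of_nat (card (Bs n :: (int^'n::finite) set))"
  using DD_hs[OF assms, of n] by (simp add: sr_def)

lemma int_sr_Phi: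
  fixes x :: "complex^'n::finite"
  assumes x: "x \<in> torus" and n: "n \<ge> 1" and N: "CARD('n) \<ge> 1"
  shows "integral TT (\<lambda>\<theta>::real^'n. sr n (wv x \<theta>) * Phi (wv x \<theta>))
     = real CARD('n) * (real CARD('n) - 1) * (2 * (2*pi)^CARD('n) * (real CARD('n) - 1) / (real n + real CARD('n) - 1))"
proof -
  define V :: real where "V = (2*pi)^CARD('n)"
  define c :: real where "c = real (card (Bs n :: (int^'n) set))"
  define cnt :: real where "cnt = real (card (Bs (n - 1) :: (int^'n) set))"
  define K :: real where "K = 2 * V * (real CARD('n) - 1) / (real n + real CARD('n) - 1)"
  have c0: "c > 0" unfolding c_def using card_Bs_pos[where 'n='n] by simp
  have rat: "cnt / c = real n / (real n + real CARD('n) - 1)"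
    unfolding cnt_def c_def by (rule ratio1[OF n N])
  have den: "real n + real CARD('n) - 1 > 0"
  proof -
    have "real CARD('n) \<ge> 1" using N by linarith
    moreover have "real n \<ge> 1" using n by simp
    ultimately show ?thesis by linarith
  qed
  let ?G = "\<lambda>i j (\<theta>::real^'n). (2 * DD n (wv x \<theta>) - DD n (wv x \<theta>) * monom_pow (wv x \<theta>) (ev i - ev j)
      - DD n (wv x \<theta>) * monom_pow (wv x \<theta>) (ev j - ev i)) / complex_of_real c"
  have eq1: "complex_of_real (sr n (wv x \<theta>) * Phi (wv x \<theta>)) =
     (\<Sum>i\<in>UNIV. \<Sum>j\<in>UNIV. if i = j then 0 else ?G i j \<theta>)" for \<theta>
  proof -
    have "complex_of_real (sr n (wv x \<theta>) * Phi (wv x \<theta>)) =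
       (\<Sum>i\<in>UNIV. \<Sum>j\<in>UNIV. complex_of_real (sr n (wv x \<theta>)) * complex_of_real ((cmod (wv x \<theta> $ i - wv x \<theta> $ j))^2))"
      unfolding Phi_def by (simp add: sum_distrib_left)
    also have "\<dots> = (\<Sum>i\<in>UNIV. \<Sum>j\<in>UNIV. if i = j then 0 else ?G i j \<theta>)"
      unfolding Phi_term[OF wv_torus[OF x]] sr_DD[OF wv_torus[OF x]] c_def
      by (intro sum.cong refl) (simp add: field_simps)
    finally show ?thesis .
  qed
  have cI: "continuous_on TT (\<lambda>\<theta>::real^'n. DD n (wv x \<theta>) * monom_pow (wv x \<theta>) d)" for d
    by (intro continuous_intros cont_DD[OF x] cont_mp[OF x])
  have intG: "integral TT (?G i j) = complex_of_real K" if ij: "i \<noteq> j" for i j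
  proof -
    have "integral TT (?G i j) = (2 * integral TT (\<lambda>\<theta>::real^'n. DD n (wv x \<theta>))
        - integral TT (\<lambda>\<theta>::real^'n. DD n (wv x \<theta>) * monom_pow (wv x \<theta>) (ev i - ev j))
        - integral TT (\<lambda>\<theta>::real^'n. DD n (wv x \<theta>) * monom_pow (wv x \<theta>) (ev j - ev i))) / complex_of_real c"
      by (simp add: integral_diff integrable_diff integrable_continuous cI cont_DD[OF x] integrable_on_mult_right)
    also have "\<dots> = complex_of_real ((2 * c * V - cnt * V - cnt * V) / c)"
      unfolding int_DD[OF x] int_DD_mp[OF x] count_ev[OF ij n] count_ev[OF ij[symmetric] n]
      by (simp add: c_def cnt_def V_def)
    also have "(2 * c * V - cnt * V - cnt * V) / c = 2 * V * (1 - cnt / c)"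
      using c0 by (simp add: field_simps)
    also have "\<dots> = K"
      unfolding rat K_def using den by (simp add: field_simps)
    finally show ?thesis .
  qed
  have "complex_of_real (integral TT (\<lambda>\<theta>::real^'n. sr n (wv x \<theta>) * Phi (wv x \<theta>)))
      = integral TT (\<lambda>\<theta>::real^'n. complex_of_real (sr n (wv x \<theta>) * Phi (wv x \<theta>)))"
  proof -
    have "(\<lambda>\<theta>::real^'n. sr n (wv x \<theta>) * Phi (wv x \<theta>)) integrable_on TT"
      by (intro integrable_continuous continuous_intros cont_sr[OF x] cont_Phi)
    from has_integral_of_real[OF integrable_integral[OF this]]
    show ?thesis by (rule integral_unique[symmetric])
  qed
  also have "\<dots> = integral TT (\<lambda>\<theta>. \<Sum>i\<in>UNIV. \<Sum>j\<in>UNIV. if i = j then 0 else ?G i j \<theta>)"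
    by (simp only: eq1)
  also have "\<dots> = (\<Sum>i\<in>UNIV. \<Sum>j\<in>UNIV. integral TT (\<lambda>\<theta>. if i = j then 0 else ?G i j \<theta>))"
  proof -
    have ci: "(\<lambda>\<theta>. if i = j then 0 else ?G i j \<theta>) integrable_on TT" for i j
    proof (cases "i = j")
      case True then show ?thesis by (simp add: integrable_0)
    next
      case False
      have "continuous_on TT (?G i j)"
        by (intro continuous_intros cont_DD[OF x] cont_mp[OF x]) (use c0 in auto)
      then show ?thesis using False by (simp add: integrable_continuous)
    qed
    have "integral TT (\<lambda>\<theta>. \<Sum>i\<in>UNIV. \<Sum>j\<in>UNIV. if i = j then 0 else ?G i j \<theta>)
       = (\<Sum>i\<in>UNIV. integral TT (\<lambda>\<theta>. \<Sum>j\<in>UNIV. if i = j then 0 else ?G i j \<theta>))"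
      by (rule integral_sum) (auto intro!: integrable_sum ci)
    also have "\<dots> = (\<Sum>i\<in>UNIV. \<Sum>j\<in>UNIV. integral TT (\<lambda>\<theta>. if i = j then 0 else ?G i j \<theta>))"
      by (intro sum.cong refl integral_sum) (auto intro!: ci)
    finally show ?thesis .
  qed
  also have "\<dots> = (\<Sum>i\<in>(UNIV::'n set). \<Sum>j\<in>UNIV. if i = j then 0 else complex_of_real K)"
    by (intro sum.cong refl) (simp add: intG del: integral_divide)
  also have "\<dots> = (\<Sum>i\<in>(UNIV::'n set). complex_of_real K * (real CARD('n) - 1))"
  proof (intro sum.cong refl)
    fix i :: 'n
    have "(\<Sum>j\<in>UNIV. if i = j then 0 else complex_of_real K) = (\<Sum>j\<in>(UNIV::'n set). complex_of_real K) - (\<Sum>j\<in>UNIV. if i = j then complex_of_real K else 0)"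
      by (subst sum_subtractf[symmetric]) (intro sum.cong, auto)
    then show "(\<Sum>j\<in>UNIV. if i = j then 0 else complex_of_real K) = complex_of_real K * (real CARD('n) - 1)"
      by (simp add: algebra_simps)
  qed
  also have "\<dots> = complex_of_real (real CARD('n) * (real CARD('n) - 1) * K)"
    by simp
  finally have "integral TT (\<lambda>\<theta>::real^'n. sr n (wv x \<theta>) * Phi (wv x \<theta>)) = real CARD('n) * (real CARD('n) - 1) * K"
    using of_real_eq_iff by blast
  then show ?thesis by (simp add: K_def V_def mult.assoc)
qed

lemma norm_le_l1_cvec: "norm (x :: complex^'n::finite) \<le> (\<Sum>i\<in>UNIV. norm (x $ i))"
  by (simp add: norm_vec_def L2_set_le_sum)

lemma compact_torus: "compact (torus :: (complex^'n::finite) set)"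
proof -
  have "closed (torus :: (complex^'n) set)"
    unfolding torus_def
    by (intro closed_Collect_all closed_Collect_eq) (intro continuous_intros)+
  moreover have "bounded (torus :: (complex^'n) set)"
  proof -
    have "norm x \<le> real CARD('n)" if "x \<in> torus" for x :: "complex^'n"
    proof -
      have "norm x \<le> (\<Sum>i\<in>UNIV. norm (x $ i))" by (rule norm_le_l1_cvec)
      also have "\<dots> = real CARD('n)" using that by (simp add: torus_def)
      finally show ?thesis .
    qed
    then show ?thesis unfolding bounded_iff by blast
  qed
  ultimately show ?thesis by (simp add: compact_eq_bounded_closed)
qed

lemma one_in_torus: "(\<chi> i. 1) \<in> torus"
  by (simp add: torus_def)

lemma int_sr:
  fixes x :: "complex^'n::finite"
  assumes x: "x \<in> torus"
  shows "integral TT (\<lambda>\<theta>::real^'n. sr n (wv x \<theta>)) = (2*pi)^CARD('n)"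
proof -
  have c0: "card (Bs n :: (int^'n) set) \<noteq> 0" using card_Bs_pos[where 'n='n] by simp
  have "(\<lambda>\<theta>::real^'n. sr n (wv x \<theta>)) integrable_on TT"
    by (intro integrable_continuous cont_sr[OF x])
  from has_integral_of_real[OF integrable_integral[OF this]]
  have "complex_of_real (integral TT (\<lambda>\<theta>::real^'n. sr n (wv x \<theta>))) = integral TT (\<lambda>\<theta>::real^'n. complex_of_real (sr n (wv x \<theta>)))"
    by (rule integral_unique[symmetric])
  also have "\<dots> = integral TT (\<lambda>\<theta>::real^'n. DD n (wv x \<theta>) / of_nat (card (Bs n :: (int^'n) set)))"
    by (simp only: sr_DD[OF wv_torus[OF x]])
  also have "\<dots> = complex_of_real ((2*pi)^CARD('n))"
    using c0 by (simp add: int_DD[OF x])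
  finally show ?thesis using of_real_eq_iff by blast
qed

lemma approx_bound:
  fixes f :: "complex ^ 'n::finite \<Rightarrow> complex"
  assumes N: "CARD('n) \<ge> 1"
    and cont: "continuous_on torus f"
    and inv: "\<forall>x\<in>torus. \<forall>u::complex. norm u = 1 \<longrightarrow> f (\<chi> i. u * x $ i) = f x"
    and e: "e > 0"
  shows "\<exists>C. \<forall>n\<ge>1. \<forall>x\<in>torus. norm (f x - torus_conv f (sigma_ker n (real CARD('n) - 1)) x)
            \<le> e + C / (real n + real CARD('n) - 1)"
proof -
  define NN where "NN = real CARD('n)"
  have NN1: "NN \<ge> 1" using N by (simp add: NN_def)
  obtain M where M: "\<forall>x\<in>torus. norm (f x) \<le> M"
    using compact_imp_bounded[OF compact_continuous_image[OF cont compact_torus]]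
    unfolding bounded_iff by auto
  have M0: "M \<ge> 0" using M one_in_torus by (meson norm_ge_zero order_trans)
  obtain \<delta> where d0: "\<delta> > 0" and d: "\<forall>x\<in>torus. \<forall>x'\<in>torus. dist x' x < \<delta> \<longrightarrow> dist (f x') (f x) < e"
    using compact_uniformly_continuous[OF cont compact_torus] e
    unfolding uniformly_continuous_on_def by metis
  define \<eta> where "\<eta> = (\<delta> / (2 * NN))^2"
  have eta0: "\<eta> > 0" using d0 NN1 by (simp add: \<eta>_def)
  have A: "norm (f y - f x) < e" if x: "x \<in> torus" and y: "y \<in> torus" and P: "Phi (\<chi> i. x $ i / y $ i) < \<eta>" for x y
  proof -
    define w where "w = (\<chi> i. x $ i / y $ i)"
    obtain i0 :: 'n where True by blast
    define u where "u = x $ i0 / y $ i0"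
    have u1: "norm u = 1" using x y by (simp add: u_def torus_def norm_divide)
    define z where "z = (\<chi> i. u * y $ i)"
    have zt: "z \<in> torus" using y u1 by (simp add: z_def torus_def norm_mult)
    have fz: "f z = f y" using inv y u1 by (simp add: z_def)
    have comp: "norm (x $ i - z $ i) < \<delta> / (2 * NN)" for i
    proof -
      have "(cmod (w $ i - w $ i0))^2 \<le> (\<Sum>j\<in>UNIV. (cmod (w $ i - w $ j))^2)"
        by (rule member_le_sum[where f="\<lambda>j. (cmod (w $ i - w $ j))^2" and i=i0]) auto
      also have "\<dots> \<le> Phi w" unfolding Phi_def
        by (rule member_le_sum[where f="\<lambda>i. \<Sum>j\<in>UNIV. (cmod (w $ i - w $ j))^2" and i=i]) (auto intro: sum_nonneg)
      also have "\<dots> < (\<delta> / (2 * NN))^2" using P by (simp add: w_def \<eta>_def)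
      finally have sq: "(cmod (w $ i - w $ i0))^2 < (\<delta> / (2 * NN))^2" .
      have dpos: "\<delta> / (2 * NN) \<ge> 0" using d0 NN1 by simp
      have lt: "cmod (w $ i - w $ i0) < \<delta> / (2 * NN)"
        by (rule power_less_imp_less_base[OF sq dpos])
      have ny: "norm (y $ i) = 1" "y $ i \<noteq> 0" using torus_norm[OF y] torus_nz[OF y] by auto
      have "x $ i - z $ i = y $ i * (w $ i - w $ i0)"
        using ny by (simp add: w_def z_def u_def field_simps)
      then have "norm (x $ i - z $ i) = cmod (w $ i - w $ i0)"
        using ny by (simp add: norm_mult)
      then show ?thesis using lt by simp
    qed
    have "dist z x = norm (x - z)" by (simp add: dist_norm norm_minus_commute)
    also have "\<dots> \<le> (\<Sum>i\<in>UNIV. norm ((x - z) $ i))" by (rule norm_le_l1_cvec)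
    also have "\<dots> \<le> (\<Sum>i\<in>(UNIV::'n set). \<delta> / (2 * NN))"
      by (intro sum_mono) (use comp in \<open>simp add: less_imp_le\<close>)
    also have "\<dots> = \<delta> / 2" using NN1 by (simp add: NN_def)
    also have "\<dots> < \<delta>" using d0 by simp
    finally have "dist z x < \<delta>" .
    then have "dist (f z) (f x) < e" using d x zt by blast
    then show ?thesis by (simp add: fz dist_norm)
  qed
  define K where "K = 2 * M / \<eta>"
  have K0: "K \<ge> 0" using M0 eta0 by (simp add: K_def)
  have B: "norm (f y - f x) \<le> e + K * Phi (\<chi> i. x $ i / y $ i)" if x: "x \<in> torus" and y: "y \<in> torus" for x y
  proof (cases "Phi (\<chi> i. x $ i / y $ i) < \<eta>")
    case True
    then show ?thesis using A[OF x y] mult_nonneg_nonneg[OF K0 Phi_nonneg[of "\<chi> i. x $ i / y $ i"]]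
      by linarith
  next
    case False
    have "norm (f y) \<le> M" "norm (f x) \<le> M" using M x y by auto
    then have "norm (f y - f x) \<le> 2 * M" using norm_triangle_ineq4[of "f y" "f x"] by linarith
    also have "\<dots> \<le> K * Phi (\<chi> i. x $ i / y $ i)"
      using False eta0 M0 by (simp add: K_def field_simps mult_left_mono)
    finally show ?thesis using e by simp
  qed
  define C where "C = K * (NN * (NN - 1) * (2 * (NN - 1)))"
  show ?thesis
  proof (intro exI allI impI ballI)
    fix n :: nat and x :: "complex^'n" assume n: "n \<ge> 1" and x: "x \<in> torus"
    define V :: real where "V = (2*pi)^CARD('n)"
    have V0: "V > 0" by (simp add: V_def)
    define E where "E = (\<lambda>\<theta>::real^'n. (\<chi> i. cis (\<theta> $ i)) :: complex^'n)"
    have Et: "E \<theta> \<in> torus" for \<theta> by (simp add: E_def cis_in_torus)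
    have contF: "continuous_on TT (\<lambda>\<theta>. f (E \<theta>))"
      by (rule continuous_on_compose2[OF cont]) (auto simp: E_def cis_in_torus intro!: continuous_intros)
    have contS: "continuous_on TT (\<lambda>\<theta>::real^'n. sr n (wv x \<theta>))" by (rule cont_sr[OF x])
    have conv: "torus_conv f (sigma_ker n (real CARD('n) - 1)) x
        = complex_of_real (1 / V) * integral TT (\<lambda>\<theta>. f (E \<theta>) * complex_of_real (sr n (wv x \<theta>)))"
      unfolding torus_conv_def V_def E_def
      using sigma_sr[OF N wv_torus[OF x]] by (simp add: wv_def)
    have fx: "f x = complex_of_real (1 / V) * integral TT (\<lambda>\<theta>. f x * complex_of_real (sr n (wv x \<theta>)))"
    proof -
      have "(\<lambda>\<theta>::real^'n. sr n (wv x \<theta>)) integrable_on TT"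
        by (intro integrable_continuous contS)
      from has_integral_of_real[where 'b=complex, OF integrable_integral[OF this]]
      have "integral TT (\<lambda>\<theta>::real^'n. complex_of_real (sr n (wv x \<theta>))) = complex_of_real (integral TT (\<lambda>\<theta>::real^'n. sr n (wv x \<theta>)))"
        by (rule integral_unique)
      then have "integral TT (\<lambda>\<theta>::real^'n. complex_of_real (sr n (wv x \<theta>))) = complex_of_real V"
        using int_sr[OF x] by (simp add: V_def)
      then show ?thesis using V0 by simp
    qed
    have iF: "(\<lambda>\<theta>. f (E \<theta>) * complex_of_real (sr n (wv x \<theta>))) integrable_on TT"
      by (intro integrable_continuous continuous_intros contF contS)
    have ix: "(\<lambda>\<theta>. f x * complex_of_real (sr n (wv x \<theta>))) integrable_on TT"
      by (intro integrable_continuous continuous_intros contS)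
    have "f x - torus_conv f (sigma_ker n (real CARD('n) - 1)) x
       = complex_of_real (1 / V) * integral TT (\<lambda>\<theta>. f x * complex_of_real (sr n (wv x \<theta>)))
         - torus_conv f (sigma_ker n (real CARD('n) - 1)) x"
      using fx by (rule arg_cong[where f="\<lambda>t. t - torus_conv f (sigma_ker n (real CARD('n) - 1)) x"])
    also have "\<dots> = complex_of_real (1 / V) * integral TT (\<lambda>\<theta>. f x * complex_of_real (sr n (wv x \<theta>)))
         - complex_of_real (1 / V) * integral TT (\<lambda>\<theta>. f (E \<theta>) * complex_of_real (sr n (wv x \<theta>)))"
      by (simp only: conv)
    also have "\<dots> = complex_of_real (1 / V) * integral TT (\<lambda>\<theta>. (f x - f (E \<theta>)) * complex_of_real (sr n (wv x \<theta>)))"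
      by (simp only: integral_diff[OF ix iF] right_diff_distrib left_diff_distrib)
    also have "norm \<dots> = (1 / V) * norm (integral TT (\<lambda>\<theta>. (f x - f (E \<theta>)) * complex_of_real (sr n (wv x \<theta>))))"
      using V0 by (simp add: norm_mult norm_divide)
    also have "norm (integral TT (\<lambda>\<theta>. (f x - f (E \<theta>)) * complex_of_real (sr n (wv x \<theta>))))
        \<le> integral TT (\<lambda>\<theta>::real^'n. e * sr n (wv x \<theta>) + K * (sr n (wv x \<theta>) * Phi (wv x \<theta>)))"
    proof (rule integral_norm_bound_integral)
      show "(\<lambda>\<theta>. (f x - f (E \<theta>)) * complex_of_real (sr n (wv x \<theta>))) integrable_on TT"
        by (intro integrable_continuous continuous_intros contF contS)
      show "(\<lambda>\<theta>::real^'n. e * sr n (wv x \<theta>) + K * (sr n (wv x \<theta>) * Phi (wv x \<theta>))) integrable_on TT"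
        by (intro integrable_continuous continuous_intros contS cont_Phi)
      fix \<theta> :: "real^'n" assume "\<theta> \<in> TT"
      have s0: "sr n (wv x \<theta>) \<ge> 0" by (rule sr_nonneg)
      have wE: "wv x \<theta> = (\<chi> i. x $ i / E \<theta> $ i)" by (simp add: wv_def E_def)
      have "norm ((f x - f (E \<theta>)) * complex_of_real (sr n (wv x \<theta>))) = norm (f (E \<theta>) - f x) * sr n (wv x \<theta>)"
        using s0 by (simp add: norm_mult norm_minus_commute)
      also have "\<dots> \<le> (e + K * Phi (wv x \<theta>)) * sr n (wv x \<theta>)"
        using B[OF x Et[of \<theta>]] s0 wE by (simp add: mult_right_mono)
      finally show "norm ((f x - f (E \<theta>)) * complex_of_real (sr n (wv x \<theta>)))
          \<le> e * sr n (wv x \<theta>) + K * (sr n (wv x \<theta>) * Phi (wv x \<theta>))"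
        by (simp add: algebra_simps)
    qed
    also have "integral TT (\<lambda>\<theta>::real^'n. e * sr n (wv x \<theta>) + K * (sr n (wv x \<theta>) * Phi (wv x \<theta>)))
       = e * V + K * (NN * (NN - 1) * (2 * V * (NN - 1) / (real n + NN - 1)))"
    proof -
      have i1: "(\<lambda>\<theta>::real^'n. e * sr n (wv x \<theta>)) integrable_on TT"
        by (intro integrable_continuous continuous_intros contS)
      have i2: "(\<lambda>\<theta>::real^'n. K * (sr n (wv x \<theta>) * Phi (wv x \<theta>))) integrable_on TT"
        by (intro integrable_continuous continuous_intros contS cont_Phi)
      show ?thesis
        using int_sr[OF x] int_sr_Phi[OF x n N]
        by (simp add: integral_add[OF i1 i2] V_def NN_def)
    qed
    finally have le: "norm (f x - torus_conv f (sigma_ker n (real CARD('n) - 1)) x)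
        \<le> 1 / V * (e * V + K * (NN * (NN - 1) * (2 * V * (NN - 1) / (real n + NN - 1))))"
      using V0 by simp (meson divide_right_mono less_imp_le)
    also have "\<dots> = e + C / (real n + real CARD('n) - 1)"
      using V0 by (simp add: C_def NN_def field_simps)
    finally show "norm (f x - torus_conv f (sigma_ker n (real CARD('n) - 1)) x)
        \<le> e + C / (real n + real CARD('n) - 1)" .
  qed
qed

theorem proposition4p8:
  fixes f :: "complex ^ 'n::finite \<Rightarrow> complex"
  assumes "CARD('n) \<ge> 2"
    and "continuous_on torus f"
    and "\<forall>x\<in>torus. \<forall>u::complex. norm u = 1 \<longrightarrow> f (\<chi> i. u * x $ i) = f x"
  shows "(\<lambda>n. SUP x\<in>torus. norm (f x - torus_conv f (sigma_ker n (real CARD('n) - 1)) x))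
           \<longlonglongrightarrow> 0"
proof (rule LIMSEQ_I)
  fix r :: real assume r: "r > 0"
  have N: "CARD('n) \<ge> 1" using assms(1) by simp
  obtain C where C: "\<forall>n\<ge>1. \<forall>x\<in>torus. norm (f x - torus_conv f (sigma_ker n (real CARD('n) - 1)) x)
            \<le> r / 3 + C / (real n + real CARD('n) - 1)"
    using approx_bound[OF N assms(2) assms(3), of "r / 3"] r by auto
  define m where "m = nat \<lceil>3 * \<bar>C\<bar> / r\<rceil> + 1"
  show "\<exists>no. \<forall>n\<ge>no. norm ((SUP x\<in>torus. norm (f x - torus_conv f (sigma_ker n (real CARD('n) - 1)) x)) - 0) < r"
  proof (intro exI allI impI)
    fix n assume nm: "m \<le> n"
    have n1: "n \<ge> 1" using nm by (simp add: m_def)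
    have rn: "real n > 3 * \<bar>C\<bar> / r"
    proof -
      have "3 * \<bar>C\<bar> / r \<le> real (nat \<lceil>3 * \<bar>C\<bar> / r\<rceil>)" by linarith
      also have "\<dots> < real n" using nm by (simp add: m_def)
      finally show ?thesis .
    qed
    have pos: "real n + real CARD('n) - 1 \<ge> real n"
    proof -
      have "real CARD('n) \<ge> 1" using N by linarith
      then show ?thesis by linarith
    qed
    have npos: "real n > 0" using n1 by simp
    have "C / (real n + real CARD('n) - 1) \<le> \<bar>C\<bar> / (real n + real CARD('n) - 1)"
      using pos npos by (intro divide_right_mono) auto
    also have "\<dots> \<le> \<bar>C\<bar> / real n"
    proof -
      have "0 < (real n + real CARD('n) - 1) * real n" using pos npos by (intro mult_pos_pos) linarith+
      then show ?thesis using pos by (intro divide_left_mono) auto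
    qed
    also have "\<dots> < r / 3"
    proof -
      have "3 * \<bar>C\<bar> < r * real n" using rn r by (simp add: field_simps)
      then show ?thesis using npos by (simp add: field_simps)
    qed
    finally have Cb: "C / (real n + real CARD('n) - 1) < r / 3" .
    let ?g = "\<lambda>x. norm (f x - torus_conv f (sigma_ker n (real CARD('n) - 1)) x)"
    have bd: "\<forall>x\<in>torus. ?g x \<le> r / 3 + C / (real n + real CARD('n) - 1)" using C n1 by blast
    have ne: "torus \<noteq> {}" using one_in_torus by blast
    have up: "(SUP x\<in>torus. ?g x) \<le> r / 3 + C / (real n + real CARD('n) - 1)"
      by (rule cSUP_least[OF ne]) (use bd in auto)
    have lo: "(SUP x\<in>torus. ?g x) \<ge> 0"
    proof -
      have "bdd_above (?g ` torus)" using bd by (intro bdd_aboveI2) auto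
      then show ?thesis by (rule cSUP_upper2[OF _ one_in_torus]) simp
    qed
    have "norm ((SUP x\<in>torus. ?g x) - 0) = (SUP x\<in>torus. ?g x)" using lo by simp
    then show "norm ((SUP x\<in>torus. ?g x) - 0) < r"
      using up Cb r by linarith
  qed
qed

end
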